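(* Assume the general single-user setting below, with $T=\tau_n+D_n$. Define $V^l(0)=0$, $$V^l(\tau)=\max_{e\in\mathcal E,\,e>0}\frac{1-[1-\zeta(i^{\min},e)]^{\tau}}{\zeta(i^{\min},e)}\big[-\lambda e+\zeta(i^{\min},e)\beta\big],\quad \tau\ge1,$$ and $V^u(0)=0$, $$V^u(\tau)=\sum_{z=1}^{\tau}\max_{e\in\mathcal E}\Big\{-\lambda e+\zeta(i^{\max},e)\big(\beta-\max\{0,V^l(z-1)\}\big)\Big\},\quad\tau\ge1.$$ Then for every state $i$ and every $1\le\tau\le T$, $$\max\{0,V^l(\tau)\}\le V(0,\tau,i)\le\min\{\beta,V^u(\tau)\}.$$
   Context: General single-user setting (perfect prediction): fix $\beta\ge0$, $\lambda\ge0$ and integers $\tau_n\ge1$, $D_n\ge0$. The channel is a finite-state Markov chain on $\{1,\dots,K\}$ with transition matrix $(P^{i,j})$. $\mathcal E\subset[0,\infty)$ is a finite set of resource levels containing $0$ and at least one positive element. For each state $i$, $\zeta(i,\cdot):\mathcal E\to[0,1]$ with $\zeta(i,0)=0$, $\zeta(i,e)>0$ for $e>0$, and $\zeta(i,\cdot)$ strictly increasing (restriction of a concave strictly increasing function). The states are totally ordered by $\zeta$: for every $i,j$, either $\zeta(i,e)\ge\zeta(j,e)$ for all $e\in\mathcal E$ or $\zeta(i,e)\le\zeta(j,e)$ for all $e\in\mathcal E$; $i^{\max}$ is a state with $\zeta(i^{\max},e)\ge\zeta(i,e)$ for all $i,e$, and $i^{\min}$ a state with $\zeta(i^{\min},e)\le\zeta(i,e)$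 for all $i,e$. The value function is $V(0,0,i)=0$ and, for $1\le\tau\le\tau_n+D_n$, $V(0,\tau,i)=\max_{e\in\mathcal E}\{-\lambda e+\zeta(i,e)\beta+(1-\zeta(i,e))\sum_jP^{i,j}V(0,\tau-1,j)\}$. *)

theory Defs
  imports "HOL-Analysis.Analysis"
begin

text \<open>Value function V(0,tau,i) of the general single-user setting (perfect prediction).
States are 1..K, P is the transition matrix, E the finite set of resource levels,
zeta the success probability function.\<close>

fun Vval :: "nat \<Rightarrow> (nat \<Rightarrow> nat \<Rightarrow> real) \<Rightarrow> real set \<Rightarrow> (nat \<Rightarrow> real \<Rightarrow> real)
    \<Rightarrow> real \<Rightarrow> real \<Rightarrow> nat \<Rightarrow> nat \<Rightarrow> real" where
  "Vval K P E zeta beta lambda 0 i = 0"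
| "Vval K P E zeta beta lambda (Suc t) i =
     Max ((\<lambda>e. - lambda * e + zeta i e * beta
              + (1 - zeta i e) * (\<Sum>j\<in>{1..K}. P i j * Vval K P E zeta beta lambda t j)) ` E)"

definition Vl :: "real set \<Rightarrow> (nat \<Rightarrow> real \<Rightarrow> real) \<Rightarrow> real \<Rightarrow> real \<Rightarrow> nat \<Rightarrow> nat \<Rightarrow> real" where
  "Vl E zeta beta lambda imin t =
     (if t = 0 then 0 else
      Max ((\<lambda>e. (1 - (1 - zeta imin e) ^ t) / zeta imin e * (- lambda * e + zeta imin e * beta))
           ` {e\<in>E. e > 0}))"

definition Vu :: "real set \<Rightarrow> (nat \<Rightarrow> real \<Rightarrow> real) \<Rightarrow> real \<Rightarrow> real \<Rightarrow> nat \<Rightarrow> nat \<Rightarrow> nat \<Rightarrow> real" where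
  "Vu E zeta beta lambda imin imax t =
     (\<Sum>z=1..t. Max ((\<lambda>e. - lambda * e
         + zeta imax e * (beta - max 0 (Vl E zeta beta lambda imin (z - 1)))) ` E))"

end

theory Submission
  imports Defs
begin

lemma maxI: "finite E \<Longrightarrow> e \<in> E \<Longrightarrow> f e \<le> Max (f ` E)"
  by (rule Max_ge) auto

lemma maxB: "finite E \<Longrightarrow> E \<noteq> {} \<Longrightarrow> (\<And>e. e \<in> E \<Longrightarrow> f e \<le> x) \<Longrightarrow> Max (f ` E) \<le> x"
  by (subst Max_le_iff) auto

theorem theorem7:
  fixes K :: nat and P :: "nat \<Rightarrow> nat \<Rightarrow> real" and E :: "real set"
    and zeta :: "nat \<Rightarrow> real \<Rightarrow> real" and beta lambda :: real
    and tau_n D_n imax imin i t :: nat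
  assumes beta: "beta \<ge> 0" and lambda: "lambda \<ge> 0"
    and taun: "tau_n \<ge> 1"
    and K: "K \<ge> 1"
    and P_nonneg: "\<forall>a\<in>{1..K}. \<forall>b\<in>{1..K}. P a b \<ge> 0"
    and P_stoch: "\<forall>a\<in>{1..K}. (\<Sum>b\<in>{1..K}. P a b) = 1"
    and E_fin: "finite E" and E_nonneg: "E \<subseteq> {0..}" and E0: "0 \<in> E"
    and E_pos: "\<exists>e\<in>E. e > 0"
    and zeta_range: "\<forall>a\<in>{1..K}. \<forall>e\<in>E. 0 \<le> zeta a e \<and> zeta a e \<le> 1"
    and zeta0: "\<forall>a\<in>{1..K}. zeta a 0 = 0"
    and zeta_pos: "\<forall>a\<in>{1..K}. \<forall>e\<in>E. e > 0 \<longrightarrow> zeta a e > 0"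
    and zeta_mono: "\<forall>a\<in>{1..K}. strict_mono_on E (zeta a)"
    and zeta_concave: "\<forall>a\<in>{1..K}. \<exists>g. concave_on {0..} g \<and> strict_mono_on {0..} g
                          \<and> (\<forall>e\<in>E. zeta a e = g e)"
    and total: "\<forall>a\<in>{1..K}. \<forall>b\<in>{1..K}.
                  (\<forall>e\<in>E. zeta a e \<ge> zeta b e) \<or> (\<forall>e\<in>E. zeta a e \<le> zeta b e)"
    and imax: "imax \<in> {1..K}" "\<forall>a\<in>{1..K}. \<forall>e\<in>E. zeta imax e \<ge> zeta a e"
    and imin: "imin \<in> {1..K}" "\<forall>a\<in>{1..K}. \<forall>e\<in>E. zeta imin e \<le> zeta a e"
    and i: "i \<in> {1..K}"
    and t: "1 \<le> t" "t \<le> tau_n + D_n"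
  shows "max 0 (Vl E zeta beta lambda imin t) \<le> Vval K P E zeta beta lambda t i
       \<and> Vval K P E zeta beta lambda t i \<le> min beta (Vu E zeta beta lambda imin imax t)"
proof -
  define V where "V = Vval K P E zeta beta lambda"
  define A where "A = (\<lambda>t i. \<Sum>j\<in>{1..K}. P i j * V t j)"
  have V0: "V 0 i' = 0" for i' by (simp add: V_def)
  have VS: "V (Suc s) i' = Max ((\<lambda>e. - lambda * e + zeta i' e * beta + (1 - zeta i' e) * A s i') ` E)" for s i'
    by (simp add: V_def A_def)
  have Ene: "E \<noteq> {}" using E0 by auto
  have avg: "a \<le> A s i' \<and> A s i' \<le> b"
    if "i' \<in> {1..K}" "\<forall>j\<in>{1..K}. a \<le> V s j \<and> V s j \<le> b" for a b s i'
  proof -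
    have "(\<Sum>j\<in>{1..K}. P i' j * a) \<le> A s i'" unfolding A_def
      by (rule sum_mono) (use that P_nonneg in \<open>auto intro: mult_left_mono\<close>)
    moreover have "A s i' \<le> (\<Sum>j\<in>{1..K}. P i' j * b)" unfolding A_def
      by (rule sum_mono) (use that P_nonneg in \<open>auto intro: mult_left_mono\<close>)
    moreover have "(\<Sum>j\<in>{1..K}. P i' j * a) = a" "(\<Sum>j\<in>{1..K}. P i' j * b) = b"
      using P_stoch that(1) by (simp_all add: sum_distrib_right[symmetric])
    ultimately show ?thesis by simp
  qed
  have L1: "\<forall>i'\<in>{1..K}. 0 \<le> V s i' \<and> V s i' \<le> beta" for s
  proof (induction s)
    case 0 then show ?case using beta by (simp add: V0)
  next
    case (Suc s)
    show ?case
    proof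
      fix i' assume i': "i' \<in> {1..K}"
      have a: "0 \<le> A s i'" "A s i' \<le> beta" using avg[OF i' Suc.IH] by auto
      have "0 \<le> - lambda * 0 + zeta i' 0 * beta + (1 - zeta i' 0) * A s i'"
        using zeta0 i' a by simp
      also have "\<dots> \<le> V (Suc s) i'" unfolding VS
        by (rule maxI[OF E_fin E0])
      finally have lo: "0 \<le> V (Suc s) i'" .
      have "V (Suc s) i' \<le> beta" unfolding VS
      proof (rule maxB[OF E_fin Ene])
        fix e assume e: "e \<in> E"
        have z: "0 \<le> zeta i' e" "zeta i' e \<le> 1" using zeta_range i' e by auto
        have "e \<ge> 0" using E_nonneg e by auto
        hence "lambda * e \<ge> 0" using lambda by simp
        moreover have "(1 - zeta i' e) * A s i' \<le> (1 - zeta i' e) * beta"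
          using z a by (intro mult_left_mono) auto
        ultimately show "- lambda * e + zeta i' e * beta + (1 - zeta i' e) * A s i' \<le> beta"
          by (simp add: algebra_simps)
      qed
      with lo show "0 \<le> V (Suc s) i' \<and> V (Suc s) i' \<le> beta" by simp
    qed
  qed
  have L2: "\<forall>i'\<in>{1..K}. (1 - (1 - zeta imin e) ^ s) / zeta imin e * (- lambda * e + zeta imin e * beta) \<le> V s i'"
    if e: "e \<in> E" "e > 0" for e s
  proof (induction s)
    case 0 then show ?case by (simp add: V0)
  next
    case (Suc s)
    define z where "z = zeta imin e"
    have zp: "0 < z" "z \<le> 1" using zeta_pos zeta_range imin(1) e unfolding z_def by auto
    define W where "W = (1 - (1 - z) ^ s) / z * (- lambda * e + z * beta)"
    have WS: "(1 - (1 - z) ^ Suc s) / z * (- lambda * e + z * beta) = - lambda * e + z * beta + (1 - z) * W"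
      unfolding W_def using zp by (simp add: field_simps)
    have Wle: "W \<le> beta"
    proof (cases s)
      case 0 then show ?thesis using beta by (simp add: W_def)
    next
      case (Suc s')
      have "W \<le> V s imin" using Suc.IH imin(1) unfolding W_def z_def by auto
      also have "\<dots> \<le> beta" using L1 imin(1) by auto
      finally show ?thesis .
    qed
    show ?case
    proof
      fix i' assume i': "i' \<in> {1..K}"
      have hh: "\<forall>j\<in>{1..K}. W \<le> V s j \<and> V s j \<le> V s j + 0" using Suc.IH unfolding W_def z_def by auto
      have a: "W \<le> A s i'"
      proof -
        have "\<forall>j\<in>{1..K}. W \<le> V s j \<and> V s j \<le> beta" using Suc.IH L1 unfolding W_def z_def by auto
        from avg[OF i' this] show ?thesis by simp
      qed
      have zi: "z \<le> zeta i' e" "zeta i' e \<le> 1" using imin(2) zeta_range i' e unfolding z_def by auto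
      have "- lambda * e + z * beta + (1 - z) * W \<le> - lambda * e + zeta i' e * beta + (1 - zeta i' e) * W"
      proof -
        have "0 \<le> (zeta i' e - z) * (beta - W)" using zi Wle by simp
        thus ?thesis by (simp add: algebra_simps)
      qed
      also have "\<dots> \<le> - lambda * e + zeta i' e * beta + (1 - zeta i' e) * A s i'"
        using a zi by (simp add: mult_left_mono)
      also have "\<dots> \<le> V (Suc s) i'" unfolding VS
        by (rule maxI[OF E_fin e(1)])
      finally show "(1 - (1 - zeta imin e) ^ Suc s) / zeta imin e * (- lambda * e + zeta imin e * beta) \<le> V (Suc s) i'"
        using WS unfolding z_def by simp
    qed
  qed
  define U where "U = Vu E zeta beta lambda imin imax"
  define L where "L = Vl E zeta beta lambda imin"
  have US: "U (Suc s) = U s + Max ((\<lambda>e. - lambda * e + zeta imax e * (beta - max 0 (L s))) ` E)" for s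
    by (simp add: U_def L_def Vu_def)
  have Lpos: "\<exists>e\<in>E. e > 0" by (rule E_pos)
  have Lfin: "finite {e\<in>E. e > 0}" "{e\<in>E. e > 0} \<noteq> {}" using E_fin E_pos by auto
  have L_le: "\<forall>i'\<in>{1..K}. max 0 (L s) \<le> V s i'" for s
  proof (cases s)
    case 0 then show ?thesis by (simp add: L_def Vl_def V0)
  next
    case (Suc s')
    show ?thesis
    proof
      fix i' assume i': "i' \<in> {1..K}"
      have "L s \<le> V s i'" unfolding L_def Vl_def using Suc
        apply (subst if_not_P, simp)
        apply (rule maxB[OF Lfin])
        using L2 i' by blast
      thus "max 0 (L s) \<le> V s i'" using L1 i' by simp
    qed
  qed
  have L3: "\<forall>i'\<in>{1..K}. V s i' \<le> U s" for s
  proof (induction s)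
    case 0 then show ?case by (simp add: V0 U_def Vu_def)
  next
    case (Suc s)
    show ?case
    proof
      fix i' assume i': "i' \<in> {1..K}"
      have a: "max 0 (L s) \<le> A s i'" "A s i' \<le> beta"
        using avg[OF i', of "max 0 (L s)" s beta] L_le L1 by auto
      have a2: "A s i' \<le> U s" using avg[OF i', of "0" s "U s"] L1 Suc.IH by auto
      have "V (Suc s) i' \<le> U s + Max ((\<lambda>e. - lambda * e + zeta imax e * (beta - max 0 (L s))) ` E)"
        unfolding VS
      proof (rule maxB[OF E_fin Ene])
        fix e assume e: "e \<in> E"
        have zi: "0 \<le> zeta i' e" "zeta i' e \<le> zeta imax e" using imax(2) zeta_range i' e by auto
        have "zeta i' e * (beta - A s i') \<le> zeta imax e * (beta - A s i')"
          using zi a by (intro mult_right_mono) auto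
        also have "\<dots> \<le> zeta imax e * (beta - max 0 (L s))"
          using zi a by (intro mult_left_mono) auto
        finally have k: "zeta i' e * (beta - A s i') \<le> zeta imax e * (beta - max 0 (L s))" .
        have "- lambda * e + zeta imax e * (beta - max 0 (L s)) \<le> Max ((\<lambda>e. - lambda * e + zeta imax e * (beta - max 0 (L s))) ` E)"
          by (rule maxI[OF E_fin e])
        with k a2 show "- lambda * e + zeta i' e * beta + (1 - zeta i' e) * A s i'
           \<le> U s + Max ((\<lambda>e. - lambda * e + zeta imax e * (beta - max 0 (L s))) ` E)"
          by (simp add: algebra_simps)
      qed
      thus "V (Suc s) i' \<le> U (Suc s)" using US by simp
    qed
  qed
  show ?thesis using L_le[of t] L1[of t] L3[of t] i unfolding V_def L_def U_def by auto
qed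

end
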